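(* Let $K=2$ and suppose that for every horizon $T$ (a multiple of $100$) a valid pair $(\eta,\gamma)=(\eta_T,\gamma_T)$ in the non-trivial regime is chosen. Then there exists $T_0$ such that for all $T\ge T_0$, WSU-UX run on the two-phase loss sequence satisfies $$\mathbb{E}[\ln\pi_{T+1,1}+\ln K]\ge c_1,\qquad c_1=\ln\tfrac54>0.$$
   Context: WSU-UX. Fix integers $K\ge 2$ and $T\ge 1$ and hyperparameters $\eta,\gamma$. The pair $(\eta,\gamma)$ is called valid if $\eta,\gamma\in(0,1/2)$ and $\eta K/\gamma\le 1/2$. Given a fixed loss sequence $\ell_t\in[0,1]^K$, WSU-UX sets $\pi_{1,i}=1/K$ and in each round $t$: forms $\tilde\pi_{t,i}=(1-\gamma)\pi_{t,i}+\gamma/K$; draws $I_t$ with $\Pr(I_t=i\mid\mathcal F_{t-1})=\tilde\pi_{t,i}$; sets $\hat\ell_{t,i}=\ell_{t,i}\mathbf 1[I_t=i]/\tilde\pi_{t,i}$; and updates $\pi_{t+1,i}=\pi_{t,i}\bigl(1-\eta(\hat\ell_{t,i}-\sum_{j}\pi_{t,j}\hat\ell_{t,j})\bigr)$; $\mathcal F_t$ is the history generated by $I_1,\dots,I_t$. Non-trivial regime: $\eta\ge T^{-2/3}$ and $\gamma\le T^{-1/3}$. Two-phase loss sequence ($K=2$, $T$ a multiple of $100$, $T_1=T/100$): $\ell_{t,1}=1,\ell_{t,2}=0$ for $1\le t\le T_1$ and $\ell_{t,1}=0,\ell_{t,2}=1$ for $T_1<t\le T$. *)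

theory Defs
  imports Complex_Main
begin

text \<open>A loss sequence is l :: nat => nat => real,
  l t i = loss of arm i at round t (t >= 1). Histories are stored in REVERSED order:
  the list (I_t # ... # I_1) records the draws of rounds 1..t.\<close>

definition valid_pair :: "nat \<Rightarrow> real \<Rightarrow> real \<Rightarrow> bool" where
  "valid_pair K \<eta> \<gamma> \<longleftrightarrow> 0 < \<eta> \<and> \<eta> < 1/2 \<and> 0 < \<gamma> \<and> \<gamma> < 1/2 \<and> \<eta> * real K / \<gamma> \<le> 1/2"

definition nontrivial :: "nat \<Rightarrow> real \<Rightarrow> real \<Rightarrow> bool" where
  "nontrivial T \<eta> \<gamma> \<longleftrightarrow> \<eta> \<ge> real T powr (-2/3) \<and> \<gamma> \<le> real T powr (-1/3)"

definition mix :: "nat \<Rightarrow> real \<Rightarrow> (nat \<Rightarrow> real) \<Rightarrow> nat \<Rightarrow> real" where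
  "mix K \<gamma> p i = (1 - \<gamma>) * p i + \<gamma> / real K"

definition loss_est :: "nat \<Rightarrow> real \<Rightarrow> (nat \<Rightarrow> nat \<Rightarrow> real) \<Rightarrow> nat \<Rightarrow> (nat \<Rightarrow> real) \<Rightarrow> nat \<Rightarrow> nat \<Rightarrow> real" where
  "loss_est K \<gamma> l t p It i = (if i = It then l t i / mix K \<gamma> p i else 0)"

definition wsu_step :: "nat \<Rightarrow> real \<Rightarrow> real \<Rightarrow> (nat \<Rightarrow> nat \<Rightarrow> real) \<Rightarrow> nat \<Rightarrow> (nat \<Rightarrow> real) \<Rightarrow> nat \<Rightarrow> (nat \<Rightarrow> real)" where
  "wsu_step K \<eta> \<gamma> l t p It = (\<lambda>i. p i * (1 - \<eta> * (loss_est K \<gamma> l t p It i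
       - (\<Sum>j\<in>{1..K}. p j * loss_est K \<gamma> l t p It j))))"

text \<open>wsu_pi ... h = \<pi>_{t+1} after the (reversed) history h of length t.\<close>
fun wsu_pi :: "nat \<Rightarrow> real \<Rightarrow> real \<Rightarrow> (nat \<Rightarrow> nat \<Rightarrow> real) \<Rightarrow> nat list \<Rightarrow> (nat \<Rightarrow> real)" where
  "wsu_pi K \<eta> \<gamma> l [] = (\<lambda>i. 1 / real K)"
| "wsu_pi K \<eta> \<gamma> l (It # h) = wsu_step K \<eta> \<gamma> l (length h + 1) (wsu_pi K \<eta> \<gamma> l h) It"

text \<open>Probability of a (reversed) history: product of Pr(I_t = i | F_{t-1}) = tilde-pi_{t,i}.\<close>
fun hist_prob :: "nat \<Rightarrow> real \<Rightarrow> real \<Rightarrow> (nat \<Rightarrow> nat \<Rightarrow> real) \<Rightarrow> nat list \<Rightarrow> real" where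
  "hist_prob K \<eta> \<gamma> l [] = 1"
| "hist_prob K \<eta> \<gamma> l (It # h) = hist_prob K \<eta> \<gamma> l h * mix K \<gamma> (wsu_pi K \<eta> \<gamma> l h) It"

definition wsu_expect :: "nat \<Rightarrow> real \<Rightarrow> real \<Rightarrow> (nat \<Rightarrow> nat \<Rightarrow> real) \<Rightarrow> nat \<Rightarrow> ((nat \<Rightarrow> real) \<Rightarrow> real) \<Rightarrow> real" where
  "wsu_expect K \<eta> \<gamma> l T f =
     (\<Sum>h\<in>{h. length h = T \<and> set h \<subseteq> {1..K}}. hist_prob K \<eta> \<gamma> l h * f (wsu_pi K \<eta> \<gamma> l h))"

definition two_phase :: "nat \<Rightarrow> nat \<Rightarrow> nat \<Rightarrow> real" where
  "two_phase T t i = (if t \<le> T div 100 then (if i = 1 then 1 else 0) else (if i = 2 then 1 else 0))"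

end

theory Submission imports Defs begin

lemma aux_C: fixes x d e p1 p2 :: real assumes "x \<noteq> 0" "d \<noteq> 0" "p1 \<noteq> 0"
  shows "x * ((p2*(d + e)/x) / (p1*d/x)) = (p2/p1) * (x + e*x/d)"
  using assms by (simp add: field_simps)
lemma aux_C2: fixes y d e p1 p2 :: real assumes "y \<noteq> 0" "d \<noteq> 0" "p1 \<noteq> 0"
  shows "y * ((p2*(d - e)/y) / (p1*d/y)) = (p2/p1) * (y - e*y/d)"
  using assms by (simp add: field_simps)

lemma phase_ineq:
  fixes p1 p2 e g :: real
  assumes p1: "p1 > 0" and p2: "p2 > 0" and s: "p1 + p2 = 1"
    and g0: "0 < g" and g1: "g < 1/2" and e0: "0 < e" and eg: "e * 2 / g \<le> 1/2"
    and x: "x = (1-g)*p1 + g/2"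
  shows "p1*(1 - e*(1/x - p1/x)) > 0" "p2*(1 - e*(0 - p1/x)) > 0"
    "p1*(1 - e*(1/x - p1/x)) + p2*(1 - e*(0 - p1/x)) = 1"
    "x * ((p2*(1 - e*(0 - p1/x))) / (p1*(1 - e*(1/x - p1/x)))) + (1 - x) * (p2/p1)
       \<le> (1 + 2*e) * (p2/p1)"
proof -
  have e4: "4*e \<le> g" using eg g0 by (simp add: field_simps)
  have xg: "x \<ge> g/2" using x g1 p1 by (simp add: mult_nonneg_nonneg)
  have x0: "x > 0" using xg g0 by linarith
  have ep2: "2*e*p2 \<le> x" proof -
    have "p2 \<le> 1" using s p1 by linarith
    hence "2*e*p2 \<le> 2*e" using e0 by (simp add: mult_left_le)
    thus ?thesis using e4 xg by linarith qed
  have "e*p2 > 0" using e0 p2 by simp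
  hence ex: "x - e*p2 > 0" using ep2 by linarith
  have k: "e*(p1*p1) + e*(p1*p2) = e*p1" using s by (metis distrib_left mult.right_neutral)
  have A: "p1*(1 - e*(1/x - p1/x)) = p1*(x - e*p2)/x" using x0 s k by (simp add: field_simps)
  have B: "p2*(1 - e*(0 - p1/x)) = p2*(x + e*p1)/x" using x0 by (simp add: field_simps)
  show "p1*(1 - e*(1/x - p1/x)) > 0" unfolding A using p1 ex x0 by simp
  show "p2*(1 - e*(0 - p1/x)) > 0" unfolding B using p2 e0 p1 x0 by (simp add: add_pos_pos)
  show "p1*(1 - e*(1/x - p1/x)) + p2*(1 - e*(0 - p1/x)) = 1" unfolding A B using x0 s
    by (simp add: field_simps) (metis distrib_right mult_1)
  have C: "x * ((p2*(x + e*p1)/x) / (p1*(x - e*p2)/x)) = (p2/p1) * (x + e*x/(x - e*p2))"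
  proof -
    have "e*p1 = e - e*p2" using s by (metis add_diff_cancel_right' distrib_left mult.right_neutral)
    hence eq: "x + e*p1 = (x - e*p2) + e" by simp
    show ?thesis unfolding eq by (rule aux_C) (use x0 ex p1 in auto)
  qed
  have D: "e*x/(x - e*p2) \<le> 2*e" using ex ep2 e0 by (simp add: field_simps)
  have r0: "p2/p1 > 0" using p1 p2 by simp
  have "x * ((p2*(x + e*p1)/x) / (p1*(x - e*p2)/x)) + (1 - x) * (p2/p1)
      = (p2/p1) * (1 + e*x/(x - e*p2))" unfolding C using p1 by (simp add: field_simps)
  also have "\<dots> \<le> (p2/p1) * (1 + 2*e)" using D r0 by (intro mult_left_mono) auto
  also have "\<dots> = (1 + 2*e) * (p2/p1)" by (rule mult.commute)
  finally show "x * ((p2*(1 - e*(0 - p1/x))) / (p1*(1 - e*(1/x - p1/x)))) + (1 - x) * (p2/p1)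
       \<le> (1 + 2*e) * (p2/p1)" unfolding A B .
qed

lemma phase_ineq2:
  fixes p1 p2 e g :: real
  assumes p1: "p1 > 0" and p2: "p2 > 0" and s: "p1 + p2 = 1"
    and g0: "0 < g" and g1: "g < 1/2" and e0: "0 < e" and eg: "e * 2 / g \<le> 1/2"
    and y: "y = (1-g)*p2 + g/2"
  shows "p2*(1 - e*(1/y - p2/y)) > 0" "p1*(1 - e*(0 - p2/y)) > 0"
    "p1*(1 - e*(0 - p2/y)) + p2*(1 - e*(1/y - p2/y)) = 1"
    "(1 - y) * (p2/p1) + y * ((p2*(1 - e*(1/y - p2/y))) / (p1*(1 - e*(0 - p2/y))))
       \<le> (1 - 2*e/3) * (p2/p1)"
proof -
  have e4: "4*e \<le> g" using eg g0 by (simp add: field_simps)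
  have yg: "y \<ge> g/2" using y g1 p2 by (simp add: mult_nonneg_nonneg)
  have y0: "y > 0" using yg g0 by linarith
  have ep1: "2*e*p1 \<le> y" proof -
    have "p1 \<le> 1" using s p2 by linarith
    hence "2*e*p1 \<le> 2*e" using e0 by (simp add: mult_left_le)
    thus ?thesis using e4 yg by linarith qed
  have ep2: "2*e*p2 \<le> y" proof -
    have "p2 \<le> 1" using s p1 by linarith
    hence "2*e*p2 \<le> 2*e" using e0 by (simp add: mult_left_le)
    thus ?thesis using e4 yg by linarith qed
  have "e*p1 > 0" using e0 p1 by simp
  hence ey: "y - e*p1 > 0" using ep1 by linarith
  have k: "e*(p1*p2) + e*(p2*p2) = e*p2" using s by (metis distrib_left distrib_right mult.right_neutral mult.commute)
  have A: "p2*(1 - e*(1/y - p2/y)) = p2*(y - e*p1)/y" using y0 s k by (simp add: field_simps)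
  have B: "p1*(1 - e*(0 - p2/y)) = p1*(y + e*p2)/y" using y0 s by (simp add: field_simps)
  have yp: "y + e*p2 > 0" using y0 e0 p2 by (simp add: add_pos_pos)
  show "p2*(1 - e*(1/y - p2/y)) > 0" unfolding A using p2 ey y0 by simp
  show "p1*(1 - e*(0 - p2/y)) > 0" unfolding B using p1 yp y0 by simp
  show "p1*(1 - e*(0 - p2/y)) + p2*(1 - e*(1/y - p2/y)) = 1" unfolding A B using y0 s
    by (simp add: field_simps) (metis distrib_right mult_1)
  have C: "y * ((p2*(y - e*p1)/y) / (p1*(y + e*p2)/y)) = (p2/p1) * (y - e*y/(y + e*p2))"
  proof -
    have "e*p1 = e - e*p2" using s by (metis add_diff_cancel_right' distrib_left mult.right_neutral)
    hence eq: "y - e*p1 = (y + e*p2) - e" by simp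
    show ?thesis unfolding eq by (rule aux_C2) (use y0 yp p1 in auto)
  qed
  have D: "e*y/(y + e*p2) \<ge> 2*e/3" using yp ep2 e0 by (simp add: field_simps)
  have r0: "p2/p1 > 0" using p1 p2 by simp
  have "(1 - y) * (p2/p1) + y * ((p2*(y - e*p1)/y) / (p1*(y + e*p2)/y))
      = (p2/p1) * (1 - e*y/(y + e*p2))" unfolding C using p1 by (simp add: field_simps)
  also have "\<dots> \<le> (p2/p1) * (1 - 2*e/3)" using D r0 by (intro mult_left_mono) auto
  also have "\<dots> = (1 - 2*e/3) * (p2/p1)" by (rule mult.commute)
  finally show "(1 - y) * (p2/p1) + y * ((p2*(1 - e*(1/y - p2/y))) / (p1*(1 - e*(0 - p2/y))))
       \<le> (1 - 2*e/3) * (p2/p1)" unfolding A B .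
qed


lemma two_set: "{1..2::nat} = {1,2}" by auto

lemma step_eq: "wsu_step 2 e g l t p It j = p j * (1 - e*(loss_est 2 g l t p It j
     - (p 1 * loss_est 2 g l t p It 1 + p 2 * loss_est 2 g l t p It 2)))"
  unfolding wsu_step_def two_set by simp

definition cc :: "nat \<Rightarrow> real \<Rightarrow> nat \<Rightarrow> real" where
  "cc T e t = (if t \<le> T div 100 then 1 + 2*e else 1 - 2*e/3)"

lemma one_step:
  fixes e g :: real and p :: "nat \<Rightarrow> real" and T t :: nat
  assumes p1: "p 1 > 0" and p2: "p 2 > 0" and s: "p 1 + p 2 = 1"
    and g0: "0 < g" and g1: "g < 1/2" and e0: "0 < e" and eg: "e * 2 / g \<le> 1/2"
  defines "q \<equiv> wsu_step 2 e g (two_phase T) t p"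
  shows "It \<in> {1,2} \<Longrightarrow> q It 1 > 0 \<and> q It 2 > 0 \<and> q It 1 + q It 2 = 1"
    and "mix 2 g p 1 * (q 1 2 / q 1 1) + mix 2 g p 2 * (q 2 2 / q 2 1) \<le> cc T e t * (p 2 / p 1)"
proof -
  define x where "x = (1-g)*p 1 + g/2"
  define y where "y = (1-g)*p 2 + g/2"
  have mx: "mix 2 g p 1 = x" "mix 2 g p 2 = y" unfolding mix_def x_def y_def by simp_all
  have s2: "p 2 = 1 - p 1" using s by simp
  have xy: "y = 1 - x" unfolding x_def y_def s2 by (simp add: algebra_simps)
  have x0: "x > 0" "y > 0" unfolding x_def y_def using p1 p2 g0 g1 by (simp_all add: add_nonneg_pos)
  note P1 = phase_ineq[OF p1 p2 s g0 g1 e0 eg x_def]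
  note P2 = phase_ineq2[OF p1 p2 s g0 g1 e0 eg y_def]
  have "(q 1 1 > 0 \<and> q 1 2 > 0 \<and> q 1 1 + q 1 2 = 1) \<and> (q 2 1 > 0 \<and> q 2 2 > 0 \<and> q 2 1 + q 2 2 = 1) \<and>
     mix 2 g p 1 * (q 1 2 / q 1 1) + mix 2 g p 2 * (q 2 2 / q 2 1) \<le> cc T e t * (p 2 / p 1)"
  proof (cases "t \<le> T div 100")
    case True
    have l: "two_phase T t 1 = 1" "two_phase T t 2 = 0" using True unfolding two_phase_def by auto
    have q1: "q 1 1 = p 1*(1 - e*(1/x - p 1/x))" "q 1 2 = p 2*(1 - e*(0 - p 1/x))"
      unfolding q_def step_eq loss_est_def using l mx by simp_all
    have q2: "q 2 1 = p 1" "q 2 2 = p 2"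
      unfolding q_def step_eq loss_est_def using l mx by simp_all
    have c: "cc T e t = 1 + 2*e" using True unfolding cc_def by simp
    show ?thesis unfolding q1 q2 c mx using P1 p1 p2 xy s by auto
  next
    case False
    have l: "two_phase T t 1 = 0" "two_phase T t 2 = 1" using False unfolding two_phase_def by auto
    have q2: "q 2 2 = p 2*(1 - e*(1/y - p 2/y))" "q 2 1 = p 1*(1 - e*(0 - p 2/y))"
      unfolding q_def step_eq loss_est_def using l mx by simp_all
    have q1: "q 1 1 = p 1" "q 1 2 = p 2"
      unfolding q_def step_eq loss_est_def using l mx by simp_all
    have c: "cc T e t = 1 - 2*e/3" using False unfolding cc_def by simp
    have yx: "x = 1 - y" using xy by simp
    show ?thesis unfolding q1 q2 c mx using P2 p1 p2 yx s by auto
  qed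
  thus "It \<in> {1,2} \<Longrightarrow> q It 1 > 0 \<and> q It 2 > 0 \<and> q It 1 + q It 2 = 1"
    and "mix 2 g p 1 * (q 1 2 / q 1 1) + mix 2 g p 2 * (q 2 2 / q 2 1) \<le> cc T e t * (p 2 / p 1)"
    by (auto simp del: One_nat_def)
qed


abbreviation Hs :: "nat \<Rightarrow> nat list set" where
  "Hs n \<equiv> {h. length h = n \<and> set h \<subseteq> {1..2}}"

lemma Hs_fin: "finite (Hs n)"
  using finite_lists_length_eq[of "{1..2::nat}" n] by (simp add: conj_commute)

lemma Hs_Suc: "Hs (Suc n) = (\<lambda>(i,h). i#h) ` ({1..2} \<times> Hs n)"
proof
  show "Hs (Suc n) \<subseteq> (\<lambda>(i,h). i#h) ` ({1..2} \<times> Hs n)"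
  proof
    fix h assume "h \<in> Hs (Suc n)"
    then obtain i h' where "h = i # h'" "length h' = n" "i \<in> {1..2}" "set h' \<subseteq> {1..2}"
      by (auto simp: length_Suc_conv)
    thus "h \<in> (\<lambda>(i,h). i#h) ` ({1..2} \<times> Hs n)" by force
  qed
qed auto

lemma sum_Hs_Suc: "(\<Sum>h\<in>Hs (Suc n). F h) = (\<Sum>h\<in>Hs n. F (1#h) + F (2#h))"
proof -
  have inj: "inj_on (\<lambda>(i,h). i#h) ({1..2::nat} \<times> Hs n)" by (auto simp: inj_on_def)
  have "(\<Sum>h\<in>Hs (Suc n). F h) = (\<Sum>(i,h)\<in>{1..2} \<times> Hs n. F (i#h))"
    unfolding Hs_Suc by (subst sum.reindex[OF inj]) (simp add: case_prod_beta comp_def)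
  also have "\<dots> = (\<Sum>i\<in>{1..2}. \<Sum>h\<in>Hs n. F (i#h))" by (rule sum.cartesian_product[symmetric])
  also have "\<dots> = (\<Sum>h\<in>Hs n. F (1#h)) + (\<Sum>h\<in>Hs n. F (2#h))" unfolding two_set by simp
  also have "\<dots> = (\<Sum>h\<in>Hs n. F (1#h) + F (2#h))" by (simp add: sum.distrib)
  finally show ?thesis .
qed

locale params =
  fixes e g :: real and T :: nat
  assumes g0: "0 < g" and g1: "g < 1/2" and e0: "0 < e" and eg: "e * 2 / g \<le> 1/2"
begin

abbreviation "ppi h \<equiv> wsu_pi 2 e g (two_phase T) h"
abbreviation "hp h \<equiv> hist_prob 2 e g (two_phase T) h"

lemma inv: "set h \<subseteq> {1..2} \<Longrightarrow> ppi h 1 > 0 \<and> ppi h 2 > 0 \<and> ppi h 1 + ppi h 2 = 1"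
proof (induction h)
  case Nil
  then show ?case by simp
next
  case (Cons It h)
  hence IH: "ppi h 1 > 0" "ppi h 2 > 0" "ppi h 1 + ppi h 2 = 1" and It: "It \<in> {1,2}" by auto
  show ?case using one_step(1)[OF IH g0 g1 e0 eg, of It T "length h + 1"] It by simp
qed

lemma mix_pos: "set h \<subseteq> {1..2} \<Longrightarrow> i \<in> {1,2} \<Longrightarrow> mix 2 g (ppi h) i > 0"
  using inv[of h] g0 g1 unfolding mix_def by (auto intro!: add_nonneg_pos)

lemma mix_sum: "set h \<subseteq> {1..2} \<Longrightarrow> mix 2 g (ppi h) 1 + mix 2 g (ppi h) 2 = 1"
proof -
  assume "set h \<subseteq> {1..2}"
  hence "ppi h 1 + ppi h 2 = 1" using inv by blast
  hence "(1-g) * ppi h 1 + (1-g) * ppi h 2 = 1 - g" by (metis distrib_left mult.right_neutral)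
  thus ?thesis unfolding mix_def by simp
qed

lemma hp_nonneg: "set h \<subseteq> {1..2} \<Longrightarrow> hp h \<ge> 0"
proof (induction h)
  case Nil then show ?case by simp
next
  case (Cons It h)
  hence "It \<in> {1,2}" "set h \<subseteq> {1..2}" by auto
  hence "mix 2 g (ppi h) It > 0" "hp h \<ge> 0" using mix_pos[of h It] Cons by auto
  thus ?case by simp
qed

lemma hp_sum: "(\<Sum>h\<in>Hs n. hp h) = 1"
proof (induction n)
  case 0
  have "Hs 0 = {[]}" by auto
  thus ?case by simp
next
  case (Suc n)
  have "(\<Sum>h\<in>Hs (Suc n). hp h) = (\<Sum>h\<in>Hs n. hp h * (mix 2 g (ppi h) 1 + mix 2 g (ppi h) 2))"
    unfolding sum_Hs_Suc by (simp add: algebra_simps)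
  also have "\<dots> = (\<Sum>h\<in>Hs n. hp h)"
  proof (rule sum.cong)
    fix h assume "h \<in> Hs n"
    hence "mix 2 g (ppi h) 1 + mix 2 g (ppi h) 2 = 1" using mix_sum[of h] by blast
    thus "hp h * (mix 2 g (ppi h) 1 + mix 2 g (ppi h) 2) = hp h" by simp
  qed simp
  finally show ?case using Suc by simp
qed

definition AA :: "nat \<Rightarrow> real" where
  "AA n = (\<Sum>h\<in>Hs n. hp h * (ppi h 2 / ppi h 1))"

lemma AA_step: "AA (Suc n) \<le> cc T e (Suc n) * AA n"
proof -
  have "AA (Suc n) = (\<Sum>h\<in>Hs n. hp h * (mix 2 g (ppi h) 1 * (ppi (1#h) 2 / ppi (1#h) 1)
        + mix 2 g (ppi h) 2 * (ppi (2#h) 2 / ppi (2#h) 1)))"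
    unfolding AA_def sum_Hs_Suc by (simp add: algebra_simps)
  also have "\<dots> \<le> (\<Sum>h\<in>Hs n. hp h * (cc T e (Suc n) * (ppi h 2 / ppi h 1)))"
  proof (rule sum_mono)
    fix h assume h: "h \<in> Hs n"
    hence I: "ppi h 1 > 0" "ppi h 2 > 0" "ppi h 1 + ppi h 2 = 1" using inv by auto
    have "mix 2 g (ppi h) 1 * (ppi (1#h) 2 / ppi (1#h) 1)
        + mix 2 g (ppi h) 2 * (ppi (2#h) 2 / ppi (2#h) 1) \<le> cc T e (Suc n) * (ppi h 2 / ppi h 1)"
      using one_step(2)[OF I g0 g1 e0 eg, of T "Suc n"] h by simp
    thus "hp h * (mix 2 g (ppi h) 1 * (ppi (1#h) 2 / ppi (1#h) 1)
        + mix 2 g (ppi h) 2 * (ppi (2#h) 2 / ppi (2#h) 1)) \<le> hp h * (cc T e (Suc n) * (ppi h 2 / ppi h 1))"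
      using hp_nonneg[of h] h by (intro mult_left_mono) auto
  qed
  also have "\<dots> = cc T e (Suc n) * AA n" unfolding AA_def sum_distrib_left by (simp add: algebra_simps)
  finally show ?thesis .
qed

definition G :: "nat \<Rightarrow> real" where
  "G n = (if n \<le> T div 100 then 2*e*n else 2*e*(T div 100) - 2*e/3 * (real n - real (T div 100)))"

lemma AA_bound: "AA n \<le> exp (G n)"
proof (induction n)
  case 0
  have "Hs 0 = {[]}" by auto
  thus ?case unfolding AA_def G_def by simp
next
  case (Suc n)
  have c0: "cc T e (Suc n) \<ge> 0" unfolding cc_def using e0 g1 eg g0
    by (auto simp: field_simps)
  have e1: "e < 1" proof -
    have "4*e \<le> g" using eg g0 by (simp add: field_simps)
    thus ?thesis using g1 by linarith qed
  have "cc T e (Suc n) * exp (G n) \<le> exp (G (Suc n))"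
  proof (cases "Suc n \<le> T div 100")
    case True
    have "cc T e (Suc n) \<le> exp (2*e)" using True exp_ge_add_one_self[of "2*e"] unfolding cc_def by simp
    hence "cc T e (Suc n) * exp (G n) \<le> exp (2*e) * exp (G n)" by (simp add: mult_right_mono)
    also have "\<dots> = exp (G (Suc n))" using True unfolding G_def by (simp add: exp_add[symmetric] algebra_simps)
    finally show ?thesis .
  next
    case False
    have "cc T e (Suc n) \<le> exp (-(2*e/3))" using False exp_ge_add_one_self[of "-(2*e/3)"] unfolding cc_def by simp
    hence "cc T e (Suc n) * exp (G n) \<le> exp (-(2*e/3)) * exp (G n)" by (simp add: mult_right_mono)
    also have "\<dots> = exp (G (Suc n))"
    proof (cases "n \<le> T div 100")
      case True
      hence "n = T div 100" using False by simp
      thus ?thesis using False unfolding G_def by (simp add: exp_add[symmetric] algebra_simps)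
    next
      case False2: False
      thus ?thesis using False unfolding G_def by (simp add: exp_add[symmetric] algebra_simps)
    qed
    finally show ?thesis .
  qed
  moreover have "AA (Suc n) \<le> cc T e (Suc n) * exp (G n)"
    using AA_step[of n] Suc mult_left_mono[OF Suc c0] by linarith
  ultimately show ?case by linarith
qed

lemma expect_ge: "wsu_expect 2 e g (two_phase T) T (\<lambda>p. ln (p 1) + ln 2) \<ge> ln 2 - AA T"
proof -
  have "(\<Sum>h\<in>Hs T. hp h * (ln 2 - ppi h 2 / ppi h 1)) \<le> (\<Sum>h\<in>Hs T. hp h * (ln (ppi h 1) + ln 2))"
  proof (rule sum_mono)
    fix h assume h: "h \<in> Hs T"
    hence I: "ppi h 1 > 0" "ppi h 2 > 0" "ppi h 1 + ppi h 2 = 1" using inv by auto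
    have "ln (1 / ppi h 1) \<le> 1 / ppi h 1 - 1" using I by (intro ln_le_minus_one) simp
    also have "\<dots> = ppi h 2 / ppi h 1" using I by (simp add: field_simps)
    finally have "- ppi h 2 / ppi h 1 \<le> ln (ppi h 1)" using I by (simp add: ln_div)
    thus "hp h * (ln 2 - ppi h 2 / ppi h 1) \<le> hp h * (ln (ppi h 1) + ln 2)"
      using hp_nonneg[of h] h by (intro mult_left_mono) auto
  qed
  also have "\<dots> = wsu_expect 2 e g (two_phase T) T (\<lambda>p. ln (p 1) + ln 2)"
    unfolding wsu_expect_def by simp
  finally have "(\<Sum>h\<in>Hs T. hp h * (ln 2 - ppi h 2 / ppi h 1)) \<le> wsu_expect 2 e g (two_phase T) T (\<lambda>p. ln (p 1) + ln 2)" .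
  moreover have "(\<Sum>h\<in>Hs T. hp h * (ln 2 - ppi h 2 / ppi h 1)) = ln 2 - AA T"
  proof -
    have "(\<Sum>h\<in>Hs T. hp h * (ln 2 - ppi h 2 / ppi h 1)) = (\<Sum>h\<in>Hs T. ln 2 * hp h) - AA T"
      unfolding AA_def by (simp add: right_diff_distrib sum_subtractf mult.commute)
    also have "(\<Sum>h\<in>Hs T. ln 2 * hp h) = ln 2 * (\<Sum>h\<in>Hs T. hp h)" by (rule sum_distrib_left[symmetric])
    finally show ?thesis using hp_sum[of T] by simp
  qed
  ultimately show ?thesis by simp
qed

end


lemma powr_third: fixes T :: real assumes "T \<ge> 1000" shows "T powr (1/3) \<ge> 10"
proof (rule ccontr)
  assume "\<not> ?thesis"
  hence a: "T powr (1/3) < 10" by simp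
  have p: "T powr (1/3) \<ge> 0" by simp
  have "(T powr (1/3))^3 = T" using assms
    by (simp add: powr_realpow[symmetric] powr_powr)
  moreover have "(T powr (1/3))^3 < 10^3" using a p by (intro power_strict_mono) auto
  ultimately show False using assms by simp
qed

theorem claim1:
  fixes \<eta> \<gamma> :: "nat \<Rightarrow> real"
  assumes "\<And>T. T \<ge> 1 \<Longrightarrow> 100 dvd T \<Longrightarrow>
             valid_pair 2 (\<eta> T) (\<gamma> T) \<and> nontrivial T (\<eta> T) (\<gamma> T)"
  shows "\<exists>T0. \<forall>T. T \<ge> T0 \<longrightarrow> T \<ge> 1 \<longrightarrow> 100 dvd T \<longrightarrow>
           wsu_expect 2 (\<eta> T) (\<gamma> T) (two_phase T) T (\<lambda>p. ln (p 1) + ln 2) \<ge> ln (5/4)"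
proof (intro exI[of _ 1000] allI impI)
  fix T :: nat assume T: "T \<ge> 1000" "T \<ge> 1" "100 dvd T"
  have V: "valid_pair 2 (\<eta> T) (\<gamma> T)" and N: "nontrivial T (\<eta> T) (\<gamma> T)" using assms T by auto
  define e where "e = \<eta> T"
  have P: "params e (\<gamma> T)" using V unfolding valid_pair_def params_def e_def by simp
  have eT: "e \<ge> real T powr (-2/3)" using N unfolding nontrivial_def e_def by simp
  have Tr: "real T \<ge> 1000" using T by simp
  have c1: "e * real T \<ge> real T powr (-2/3) * real T" using eT Tr by (intro mult_right_mono) auto
  have c2: "real T powr (-2/3) * real T = real T powr (1/3)"
  proof -
    have "real T powr (-2/3) * real T = real T powr (-2/3) * real T powr 1" using Tr by simp
    also have "\<dots> = real T powr (-2/3 + 1)" by (rule powr_add[symmetric])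
    finally show ?thesis by simp
  qed
  have eT10: "e * real T \<ge> 10" using c1 c2 powr_third[OF Tr] by linarith
  obtain k where k: "T = 100 * k" using T(3) by auto
  have kd: "T div 100 = k" using k by simp
  have Gv: "params.G e T T = - 64 * e * real k"
    unfolding params.G_def[OF P] kd using k by (simp add: algebra_simps)
  have ek: "e * real k \<ge> 1/10" using eT10 k by simp
  have "params.G e T T \<le> -6" using Gv ek by simp
  hence "exp (params.G e T T) \<le> exp (-6)" by simp
  also have "exp (-6::real) = 1 / exp 6" by (simp add: exp_minus field_simps)
  also have "\<dots> \<le> 1 / 7" using exp_ge_add_one_self[of "6::real"] by (simp add: field_simps)
  finally have ex: "exp (params.G e T T) \<le> 1/7" .
  have l58: "ln (5/8::real) \<le> 5/8 - 1" by (rule ln_le_minus_one) simp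
  have l54: "ln (5/4::real) = ln (5/8) + ln 2"
  proof -
    have "ln ((5/8) * 2::real) = ln (5/8) + ln 2" by (rule ln_mult_pos) auto
    thus ?thesis by simp
  qed
  have "wsu_expect 2 e (\<gamma> T) (two_phase T) T (\<lambda>p. ln (p 1) + ln 2) \<ge> ln 2 - params.AA e (\<gamma> T) T T"
    by (rule params.expect_ge[OF P])
  moreover have "params.AA e (\<gamma> T) T T \<le> exp (params.G e T T)" by (rule params.AA_bound[OF P])
  ultimately show "wsu_expect 2 (\<eta> T) (\<gamma> T) (two_phase T) T (\<lambda>p. ln (p 1) + ln 2) \<ge> ln (5/4)"
    using ex l58 l54 unfolding e_def by linarith
qed

end
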